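(* Suppose $p=2$, and let $E\subseteq\mathcal F(\Lambda,\bar K)$ be a nonzero translation-invariant subspace of finite dimension. Then there exists a nonzero function $h\in E^0$ whose period lattice $\Lambda(h)$ is characteristic, i.e. of odd index in $\Lambda$.
   Context: $K=\mathrm{GF}(2^r)$, $\bar K$ an algebraic closure; $\Lambda$ is a lattice (free abelian group of finite rank); $\mathcal F(\Lambda,\bar K)$ is the space of all functions $\Lambda\to\bar K$; translation-invariant means stable under all $f\mapsto f(\cdot+v)$, $v\in\Lambda$. $E^0$ is the span of all characters (homomorphisms $\Lambda\to\bar K^\times$) lying in $E$. $\Lambda(h)=\{v\in\Lambda:h(\cdot+v)=h\}$. A sublattice is characteristic if it is an intersection of finitely many kernels of characters $\Lambda\to\bar K^\times$. *)

theory Defs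
  imports "HOL-Algebra.Algebraic_Closure_Type" "HOL-Library.Function_Algebras"
begin

text \<open>A lattice: an abelian group that is free of finite rank n, i.e. isomorphic
  (as an abelian group) to Z^n, realised as integer sequences supported in {0..<n}.\<close>
definition free_of_rank :: "nat \<Rightarrow> ('l::ab_group_add \<Rightarrow> (nat \<Rightarrow> int)) \<Rightarrow> bool" where
  "free_of_rank n \<phi> \<longleftrightarrow>
     bij_betw \<phi> UNIV {c. \<forall>i\<ge>n. c i = 0} \<and> (\<forall>u v. \<phi> (u + v) = (\<lambda>i. \<phi> u i + \<phi> v i))"

definition is_lattice :: "'l::ab_group_add itself \<Rightarrow> bool" where
  "is_lattice _ \<longleftrightarrow> (\<exists>n (\<phi>::'l \<Rightarrow> nat \<Rightarrow> int). free_of_rank n \<phi>)"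

definition fscale :: "'k::field \<Rightarrow> ('l \<Rightarrow> 'k) \<Rightarrow> ('l \<Rightarrow> 'k)" where
  "fscale c f = (\<lambda>x. c * f x)"

definition fspan :: "('l \<Rightarrow> 'k::field) set \<Rightarrow> ('l \<Rightarrow> 'k) set" where
  "fspan S = module.span fscale S"

definition fsubspace :: "('l \<Rightarrow> 'k::field) set \<Rightarrow> bool" where
  "fsubspace S = module.subspace fscale S"

definition finite_dim :: "('l \<Rightarrow> 'k::field) set \<Rightarrow> bool" where
  "finite_dim E \<longleftrightarrow> (\<exists>B. finite B \<and> B \<subseteq> E \<and> fspan B = E)"

definition translation_invariant :: "('l::ab_group_add \<Rightarrow> 'k) set \<Rightarrow> bool" where
  "translation_invariant E \<longleftrightarrow> (\<forall>f\<in>E. \<forall>v. (\<lambda>x. f (x + v)) \<in> E)"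

definition character :: "('l::ab_group_add \<Rightarrow> 'k::field) \<Rightarrow> bool" where
  "character \<psi> \<longleftrightarrow> (\<forall>v. \<psi> v \<noteq> 0) \<and> (\<forall>u v. \<psi> (u + v) = \<psi> u * \<psi> v)"

definition char_kernel :: "('l::ab_group_add \<Rightarrow> 'k::field) \<Rightarrow> 'l set" where
  "char_kernel \<psi> = {v. \<psi> v = 1}"

definition E0 :: "('l::ab_group_add \<Rightarrow> 'k::field) set \<Rightarrow> ('l \<Rightarrow> 'k) set" where
  "E0 E = fspan {\<psi>\<in>E. character \<psi>}"

definition period_lattice :: "('l::ab_group_add \<Rightarrow> 'k) \<Rightarrow> 'l set" where
  "period_lattice h = {v. (\<lambda>x. h (x + v)) = h}"

definition characteristic_sublattice :: "'l::ab_group_add set \<Rightarrow> 'k::field itself \<Rightarrow> bool" where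
  "characteristic_sublattice M _ \<longleftrightarrow>
     (\<exists>(Chs::(('l \<Rightarrow> 'k) set)). finite Chs \<and> (\<forall>\<psi>\<in>Chs. character \<psi>) \<and> M = (\<Inter>\<psi>\<in>Chs. char_kernel \<psi>))"

end

theory Submission
  imports Defs
begin

lemma fscale_apply: "fscale c f x = c * f x" by (simp add: fscale_def)

interpretation fvs: vector_space "fscale :: 'k::field \<Rightarrow> ('l \<Rightarrow> 'k) \<Rightarrow> ('l \<Rightarrow> 'k)"
  by unfold_locales (auto simp: fun_eq_iff fscale_apply algebra_simps)

definition tr :: "'l::ab_group_add \<Rightarrow> ('l \<Rightarrow> 'k::field) \<Rightarrow> ('l \<Rightarrow> 'k)" where
  "tr v f = (\<lambda>x. f (x + v))"

lemma tr_add: "tr v (f + g) = tr v f + tr v g" by (simp add: tr_def fun_eq_iff fscale_apply)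
lemma tr_zero: "tr v 0 = 0" by (simp add: tr_def fun_eq_iff fscale_apply)
lemma tr_scale: "tr v (fscale c f) = fscale c (tr v f)" by (simp add: tr_def fun_eq_iff fscale_apply)
lemma tr_sum: "tr v (\<Sum>i\<in>A. f i) = (\<Sum>i\<in>A. tr v (f i))"
proof (induction A rule: infinite_finite_induct)
  case (insert x F)
  then show ?case by (simp only: sum.insert[OF insert(1,2)] tr_add insert(3))
next
  case (infinite A) then show ?case by (metis sum.infinite tr_zero)
next
  case empty show ?case by (simp only: sum.empty tr_zero)
qed

definition ev :: "'l::ab_group_add \<Rightarrow> 'k::field poly \<Rightarrow> ('l \<Rightarrow> 'k) \<Rightarrow> ('l \<Rightarrow> 'k)" where
  "ev v p f = (\<Sum>i\<le>degree p. fscale (coeff p i) ((tr v ^^ i) f))"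

lemma ev_bound: "degree p \<le> n \<Longrightarrow> ev v p f = (\<Sum>i\<le>n. fscale (coeff p i) ((tr v ^^ i) f))"
  unfolding ev_def by (rule sum.mono_neutral_left) (auto simp: coeff_eq_0 fun_eq_iff fscale_apply)

lemma ev_add: "ev v (p + q) f = ev v p f + ev v q f"
proof -
  let ?n = "max (degree p) (degree q)"
  have "ev v (p+q) f = (\<Sum>i\<le>?n. fscale (coeff (p+q) i) ((tr v ^^ i) f))"
    by (rule ev_bound) (simp add: degree_add_le)
  also have "\<dots> = (\<Sum>i\<le>?n. fscale (coeff p i) ((tr v ^^ i) f)) + (\<Sum>i\<le>?n. fscale (coeff q i) ((tr v ^^ i) f))"
    by (simp add: sum.distrib fvs.scale_left_distrib)
  also have "\<dots> = ev v p f + ev v q f" using ev_bound[of p ?n v f] ev_bound[of q ?n v f] by simp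
  finally show ?thesis .
qed

lemma ev_zero: "ev v 0 f = 0" by (simp add: ev_def fun_eq_iff fscale_apply)

lemma ev_diff: "ev v (p - q) f = ev v p f - ev v q f"
  using ev_add[of v "p - q" q f] by simp

lemma ev_sum: "ev v (\<Sum>i\<in>A. p i) f = (\<Sum>i\<in>A. ev v (p i) f)"
  by (induction A rule: infinite_finite_induct) (auto simp: ev_zero ev_add)

lemma ev_smult: "ev v (smult a p) f = fscale a (ev v p f)"
proof -
  have "ev v (smult a p) f = (\<Sum>i\<le>degree p. fscale (coeff (smult a p) i) ((tr v ^^ i) f))"
    by (rule ev_bound) (simp add: degree_smult_le)
  also have "\<dots> = fscale a (ev v p f)"
    by (simp add: ev_def fvs.scale_sum_right fvs.scale_scale)
  finally show ?thesis .
qed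

lemma ev_monom: "ev v (monom a j) f = fscale a ((tr v ^^ j) f)"
proof -
  have "ev v (monom a j) f = (\<Sum>i\<le>j. fscale (coeff (monom a j) i) ((tr v ^^ i) f))"
    by (rule ev_bound) (simp add: degree_monom_le)
  also have "\<dots> = (\<Sum>i\<le>j. if i = j then fscale a ((tr v ^^ i) f) else 0)"
    by (rule sum.cong) (auto simp: coeff_monom fun_eq_iff fscale_apply)
  also have "\<dots> = fscale a ((tr v ^^ j) f)" by simp
  finally show ?thesis .
qed

lemma ev_const: "ev v [:c:] f = fscale c f"
  by (simp add: ev_def)

lemma ev_pCons0: "ev v (pCons 0 p) f = tr v (ev v p f)"
proof -
  have "ev v (pCons 0 p) f = (\<Sum>i\<le>Suc (degree p). fscale (coeff (pCons 0 p) i) ((tr v ^^ i) f))"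
    by (rule ev_bound) (simp add: degree_pCons_le)
  also have "\<dots> = (\<Sum>i\<le>degree p. fscale (coeff p i) ((tr v ^^ Suc i) f))"
    by (subst sum.atMost_Suc_shift) (simp add: fun_eq_iff fscale_apply)
  also have "\<dots> = tr v (ev v p f)"
    by (simp add: ev_def tr_sum tr_scale)
  finally show ?thesis .
qed

lemma ev_in:
  assumes W: "fvs.subspace W" and inv: "\<forall>g\<in>W. tr v g \<in> W" and f: "f \<in> W"
  shows "ev v p f \<in> W"
proof -
  have "(tr v ^^ i) f \<in> W" for i
    by (induction i) (use f inv in auto)
  then show ?thesis unfolding ev_def
    by (intro fvs.subspace_sum[OF W] fvs.subspace_scale[OF W]) auto
qed

lemma eigen_from_poly:
  fixes p :: "'k::alg_closed_field poly" and f :: "'l::ab_group_add \<Rightarrow> 'k"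
  assumes W: "fvs.subspace W" and inv: "\<forall>g\<in>W. tr v g \<in> W"
  shows "p \<noteq> 0 \<Longrightarrow> f \<in> W \<Longrightarrow> f \<noteq> 0 \<Longrightarrow> ev v p f = 0 \<Longrightarrow> \<exists>u\<in>W. u \<noteq> 0 \<and> (\<exists>a. tr v u = fscale a u)"
proof (induction "degree p" arbitrary: p rule: less_induct)
  case less
  show ?case
  proof (cases "degree p = 0")
    case True
    then obtain c where p: "p = [:c:]" by (meson degree_eq_zeroE)
    with less.prems have "c \<noteq> 0" by auto
    with less.prems p show ?thesis by (simp add: ev_const)
  next
    case False
    then obtain a where "poly p a = 0" using alg_closed_imp_poly_has_root by blast
    then obtain q where pq: "p = [:-a,1:] * q" using poly_eq_0_iff_dvd by (metis dvdE)
    have q0: "q \<noteq> 0" using less.prems pq by auto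
    have "degree p = degree [:-a,1:] + degree q" using pq q0
      by (metis degree_mult_eq pCons_eq_0_iff one_neq_zero)
    then have dq: "degree q < degree p" by simp
    define u where "u = ev v q f"
    have uW: "u \<in> W" unfolding u_def by (rule ev_in[OF W inv less.prems(2)])
    have eq: "[:-a,1:] * q = smult (-a) q + pCons 0 q" by simp
    have "ev v p f = fscale (-a) u + tr v u"
      unfolding pq eq by (simp only: ev_add ev_smult ev_pCons0 u_def)
    with less.prems have "fscale (-a) u + tr v u = 0" by simp
    then have "tr v u = - fscale (-a) u" by (simp only: add_eq_0_iff)
    then have "tr v u = fscale a u" by (simp only: fvs.scale_minus_left minus_minus)
    show ?thesis
    proof (cases "u = 0")
      case True
      show ?thesis by (rule less.hyps[OF dq q0 less.prems(2) less.prems(3) True[unfolded u_def]])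
    next
      case False
      then show ?thesis using uW \<open>tr v u = fscale a u\<close> by blast
    qed
  qed
qed


lemma span_image_sum:
  fixes g :: "nat \<Rightarrow> ('l \<Rightarrow> 'k::field)"
  assumes "finite A" shows "y \<in> fvs.span (g ` A) \<Longrightarrow> \<exists>c. y = (\<Sum>i\<in>A. fscale (c i) (g i))"
  using assms
proof (induction A arbitrary: y rule: finite_induct)
  case empty then show ?case by (simp add: fvs.span_empty)
next
  case (insert a A)
  from insert.prems have "y \<in> fvs.span (insert (g a) (g ` A))" by simp
  then obtain k where "y - fscale k (g a) \<in> fvs.span (g ` A)" by (auto simp: fvs.span_insert)
  then obtain c where c: "y - fscale k (g a) = (\<Sum>i\<in>A. fscale (c i) (g i))" using insert.IH by blast
  have s: "(\<Sum>i\<in>A. fscale ((c(a:=k)) i) (g i)) = (\<Sum>i\<in>A. fscale (c i) (g i))"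
    by (rule sum.cong) (use insert.hyps in auto)
  have "y = fscale k (g a) + (\<Sum>i\<in>A. fscale (c i) (g i))" using c by (metis add.commute diff_add_cancel)
  then have "y = (\<Sum>i\<in>insert a A. fscale ((c(a:=k)) i) (g i))"
    using insert.hyps s by simp
  then show ?case by blast
qed

lemma exists_dep:
  fixes g :: "nat \<Rightarrow> ('l \<Rightarrow> 'k::field)"
  assumes B: "finite B" and gB: "\<And>i. g i \<in> fvs.span B"
  shows "\<exists>k. g k \<in> fvs.span (g ` {..<k})"
proof (rule ccontr)
  assume H: "\<not> ?thesis"
  have ind: "fvs.independent (g ` {..<n}) \<and> card (g ` {..<n}) = n" for n
  proof (induction n)
    case 0 show ?case by (simp add: fvs.independent_empty)
  next
    case (Suc n)
    have ns: "g n \<notin> fvs.span (g ` {..<n})" using H by blast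
    have nn: "g n \<notin> g ` {..<n}" using ns fvs.span_base by metis
    have im: "g ` {..<Suc n} = insert (g n) (g ` {..<n})" by (simp add: lessThan_Suc)
    have i1: "fvs.independent (insert (g n) (g ` {..<n}))"
      using fvs.independent_insertI[OF ns] Suc by blast
    have c1: "card (insert (g n) (g ` {..<n})) = Suc n"
      using nn Suc by (simp add: card_insert_if)
    show ?case unfolding im using i1 c1 by blast
  qed
  have "g ` {..<Suc (card B)} \<subseteq> fvs.span B" using gB by auto
  then have "card (g ` {..<Suc (card B)}) \<le> card B"
    using fvs.independent_span_bound[OF B] ind by blast
  then show False using ind[of "Suc (card B)"] by simp
qed

lemma eigvec:
  fixes W :: "('l::ab_group_add \<Rightarrow> 'k::alg_closed_field) set"
  assumes W: "fvs.subspace W" and inv: "\<forall>g\<in>W. tr v g \<in> W" and B: "finite B" "W \<subseteq> fvs.span B"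
    and ne: "f \<in> W" "f \<noteq> 0"
  shows "\<exists>u\<in>W. u \<noteq> 0 \<and> (\<exists>a. tr v u = fscale a u)"
proof -
  define g where "g i = (tr v ^^ i) f" for i
  have gW: "g i \<in> W" for i
    unfolding g_def by (induction i) (use ne inv in auto)
  obtain k where "g k \<in> fvs.span (g ` {..<k})" using exists_dep[of B g] B gW by blast
  then obtain c where c: "g k = (\<Sum>i\<in>{..<k}. fscale (c i) (g i))"
    using span_image_sum[of "{..<k}" _ g] by auto
  define p where "p = monom 1 k - (\<Sum>i<k. monom (c i) i)"
  have "coeff p k = 1" by (simp add: p_def coeff_diff coeff_sum coeff_monom)
  hence p0: "p \<noteq> 0" by auto
  have "ev v p f = g k - (\<Sum>i<k. fscale (c i) (g i))"
    by (simp only: p_def ev_diff ev_sum ev_monom g_def fvs.scale_one)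
  also have "\<dots> = 0" by (subst c[symmetric]) (rule diff_self)
  finally have "ev v p f = 0" .
  then show ?thesis by (rule eigen_from_poly[OF W inv p0 ne])
qed

lemma dim_lt:
  fixes W :: "('l \<Rightarrow> 'k::field) set"
  assumes W: "fvs.subspace W" and W': "fvs.subspace W'" and sub: "W' \<subseteq> W" and ne: "W' \<noteq> W"
    and B: "finite B" "W \<subseteq> fvs.span B"
  shows "fvs.dim W' < fvs.dim W"
proof -
  obtain B' where B': "B' \<subseteq> W'" "fvs.independent B'" "W' \<subseteq> fvs.span B'" "card B' = fvs.dim W'"
    by (rule fvs.basis_exists[of W'])
  obtain BW where BW: "BW \<subseteq> W" "fvs.independent BW" "W \<subseteq> fvs.span BW" "card BW = fvs.dim W"
    by (rule fvs.basis_exists[of W])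
  have "BW \<subseteq> fvs.span B" using BW(1) B(2) by (rule order.trans)
  then have fBW: "finite BW" using fvs.independent_span_bound[OF B(1) BW(2)] by (simp only:)
  obtain w where w: "w \<in> W" "w \<notin> W'" using sub ne by blast
  have spB': "fvs.span B' \<subseteq> W'" by (rule fvs.span_minimal[OF B'(1) W'])
  have wn: "w \<notin> fvs.span B'" using w spB' by (auto simp del: fvs.span_base)
  have ind: "fvs.independent (insert w B')" using fvs.independent_insertI[OF wn B'(2)] .
  have "B' \<subseteq> fvs.span BW" using B'(1) sub BW(3) by (meson order.trans)
  then have "insert w B' \<subseteq> fvs.span BW" using w(1) BW(3) by (meson insert_subset subsetD)
  then have fc: "finite (insert w B') \<and> card (insert w B') \<le> card BW"
    by (rule fvs.independent_span_bound[OF fBW ind])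
  have wB: "w \<notin> B'" using wn fvs.span_base by metis
  have "finite B'" using fc by simp
  then have "card (insert w B') = Suc (card B')" using wB by simp
  then show ?thesis using fc B'(4) BW(4) by linarith
qed


lemma main_char:
  fixes W :: "('l::ab_group_add \<Rightarrow> 'k::alg_closed_field) set"
  shows "fvs.subspace W \<Longrightarrow> finite B \<Longrightarrow> W \<subseteq> fvs.span B \<Longrightarrow> W \<noteq> {0} \<Longrightarrow>
    translation_invariant W \<Longrightarrow> \<exists>\<psi>\<in>W. character \<psi>"
proof (induction "fvs.dim W" arbitrary: W rule: less_induct)
  case less
  have W: "fvs.subspace W" by fact
  have TI: "\<And>w v. w \<in> W \<Longrightarrow> tr v w \<in> W"
    using less.prems(5) unfolding translation_invariant_def tr_def by blast
  show ?case
  proof (cases "\<forall>v. \<exists>a. \<forall>w\<in>W. tr v w = fscale a w")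
    case True
    then obtain \<alpha> where al: "\<And>v w. w \<in> W \<Longrightarrow> tr v w = fscale (\<alpha> v) w" by metis
    obtain w where w: "w \<in> W" "w \<noteq> 0" using less.prems(4) fvs.subspace_0[OF W] by blast
    have wx: "w (x + v) = \<alpha> v * w x" for x v
      using al[OF w(1), of v] by (simp add: tr_def fun_eq_iff fscale_apply)
    have w0: "w 0 \<noteq> 0"
    proof
      assume "w 0 = 0"
      then have "w v = 0" for v using wx[of 0 v] by simp
      with w show False by (auto simp: fun_eq_iff)
    qed
    have anz: "\<alpha> v \<noteq> 0" for v using wx[of "-v" v] w0 by auto
    have amul: "\<alpha> (u + v) = \<alpha> u * \<alpha> v" for u v
    proof -
      have "\<alpha> (u + v) * w 0 = w (u + v)" using wx[of 0 "u+v"] by simp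
      also have "\<dots> = \<alpha> v * (\<alpha> u * w 0)" using wx[of u v] wx[of 0 u] by simp
      finally show ?thesis using w0 by (simp add: mult_ac)
    qed
    define \<psi> where "\<psi> = fscale (1 / w 0) w"
    have psi: "\<psi> v = \<alpha> v" for v using wx[of 0 v] w0 by (simp add: \<psi>_def fscale_apply)
    have "character \<psi>" unfolding character_def psi using anz amul by simp
    moreover have "\<psi> \<in> W" unfolding \<psi>_def by (rule fvs.subspace_scale[OF W w(1)])
    ultimately show ?thesis by blast
  next
    case False
    then obtain v where nv: "\<not> (\<exists>a. \<forall>w\<in>W. tr v w = fscale a w)" by blast
    obtain f where f: "f \<in> W" "f \<noteq> 0" using less.prems(4) fvs.subspace_0[OF W] by blast
    obtain u a where u: "u \<in> W" "u \<noteq> 0" "tr v u = fscale a u"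
      using eigvec[OF W _ less.prems(2,3) f] TI by blast
    define W' where "W' = {w\<in>W. tr v w = fscale a w}"
    have sub: "W' \<subseteq> W" by (auto simp: W'_def)
    have ne: "W' \<noteq> W" using nv by (auto simp: W'_def)
    have uW': "u \<in> W'" using u by (simp add: W'_def)
    have z: "0 \<in> W'"
      using fvs.subspace_0[OF W] by (simp add: W'_def tr_zero fvs.scale_zero_right)
    have ad: "x + y \<in> W'" if "x \<in> W'" "y \<in> W'" for x y
      using that by (simp add: W'_def fvs.subspace_add[OF W] tr_add fvs.scale_right_distrib)
    have sc: "fscale c x \<in> W'" if "x \<in> W'" for c x
      using that by (simp add: W'_def fvs.subspace_scale[OF W] tr_scale fvs.scale_scale mult.commute)
    have W': "fvs.subspace W'"
      unfolding fvs.subspace_def using z ad sc by blast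
    have ne0: "W' \<noteq> {0}" using uW' u(2) by blast
    have TI': "translation_invariant W'"
      unfolding translation_invariant_def
    proof (intro ballI allI)
      fix w v' assume "w \<in> W'"
      then have w: "w \<in> W" "tr v w = fscale a w" by (auto simp: W'_def)
      have "tr v (tr v' w) = tr v' (tr v w)" by (simp add: tr_def add_ac)
      also have "\<dots> = fscale a (tr v' w)" using w(2) by (simp add: tr_scale)
      finally have "tr v (tr v' w) = fscale a (tr v' w)" .
      moreover have "tr v' w \<in> W" using TI w(1) by blast
      ultimately show "(\<lambda>x. w (x + v')) \<in> W'" by (simp add: W'_def tr_def)
    qed
    have dlt: "fvs.dim W' < fvs.dim W"
      by (rule dim_lt[OF W W' sub ne less.prems(2,3)])
    have "W' \<subseteq> fvs.span B" using sub less.prems(3) by blast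
    then obtain \<psi> where "\<psi> \<in> W'" "character \<psi>"
      using less.hyps[OF dlt W' less.prems(2) _ ne0 TI'] by blast
    then show ?thesis using sub by blast
  qed
qed

theorem lemma5p13:
  fixes E :: "('l::ab_group_add \<Rightarrow> 'f::{field,finite} alg_closure) set"
    and r :: nat
  assumes "r \<ge> 1" and "card (UNIV :: 'f set) = 2 ^ r"
    and "is_lattice TYPE('l)"
    and "fsubspace E" and "finite_dim E" and "translation_invariant E"
    and "E \<noteq> {0}"
  shows "\<exists>h\<in>E0 E. h \<noteq> 0 \<and>
           characteristic_sublattice (period_lattice h) TYPE('f alg_closure)"
proof -
  have W: "fvs.subspace E" using assms(4) by (simp add: fsubspace_def)
  obtain B where B: "finite B" "B \<subseteq> E" "fspan B = E" using assms(5) by (auto simp: finite_dim_def)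
  have BE: "E \<subseteq> fvs.span B" using B(3) by (simp add: fspan_def)
  obtain \<psi> where psi: "\<psi> \<in> E" "character \<psi>"
    using main_char[OF W B(1) BE assms(7,6)] by blast
  have h: "\<psi> \<in> E0 E" unfolding E0_def fspan_def using psi by (intro fvs.span_base) simp
  have nz: "\<psi> \<noteq> 0"
  proof
    assume "\<psi> = 0"
    then have "\<psi> 0 = 0" by simp
    with psi(2) show False by (simp add: character_def)
  qed
  have "period_lattice \<psi> = char_kernel \<psi>"
  proof (intro subset_antisym subsetI)
    fix v assume "v \<in> period_lattice \<psi>"
    then have "\<psi> (0 + v) = \<psi> 0" by (metis (mono_tags) mem_Collect_eq period_lattice_def)
    moreover have "\<psi> 0 = 1"
    proof -
      have "\<psi> 0 * \<psi> 0 = \<psi> 0 * 1" using psi(2) unfolding character_def by (metis add_0 mult_1_right)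
      then show ?thesis using psi(2) unfolding character_def by (metis mult_left_cancel)
    qed
    ultimately show "v \<in> char_kernel \<psi>" by (simp add: char_kernel_def)
  next
    fix v assume "v \<in> char_kernel \<psi>"
    then show "v \<in> period_lattice \<psi>" using psi(2)
      by (simp add: character_def char_kernel_def period_lattice_def fun_eq_iff)
  qed
  then have "characteristic_sublattice (period_lattice \<psi>) TYPE('f alg_closure)"
    unfolding characteristic_sublattice_def using psi(2) by (intro exI[of _ "{\<psi>}"]) auto
  then show ?thesis using h nz by blast
qed

end
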